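(* Let $p>0$ and let $u:\mathbb{R}^4\to\mathbb{R}$ be a measurable function such that $(1-|y|^p)e^{4u}\in L^1(\mathbb{R}^4)$. Then for every $x\in\mathbb{R}^4$, $$\frac{1}{|B_r(x)|}\int_{B_r(x)}u^+\,dy\to 0\quad\text{as } r\to+\infty.$$
   Context: $u^+=\max(u,0)$; $B_r(x)$ is the ball of radius $r$ centered at $x$ and $|B_r(x)|$ its Lebesgue measure. *)

theory Defs
  imports "HOL-Analysis.Analysis"
begin

end

theory Submission
  imports Defs
begin

lemma ball_meas:
  fixes x :: "real^4" assumes "r \<ge> 0"
  shows "measure lebesgue (ball x r) = unit_ball_vol 4 * r ^ 4"
proof -
  have "measure lebesgue (ball x r) = measure lborel (ball x r)"
    by (rule measure_completion) simp
  also have "\<dots> = unit_ball_vol (DIM(real^4)) * r ^ DIM(real^4)"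
    by (rule content_ball[OF assms])
  finally show ?thesis by simp
qed

theorem lemma3p3:
  fixes u :: "real^4 \<Rightarrow> real" and p :: real and x :: "real^4"
  assumes "p > 0"
    and "u \<in> borel_measurable lebesgue"
    and "integrable lebesgue (\<lambda>y. (1 - norm y powr p) * exp (4 * u y))"
  shows "((\<lambda>r. (1 / measure lebesgue (ball x r)) *
            (\<integral>y\<in>ball x r. max (u y) 0 \<partial>lebesgue)) \<longlongrightarrow> 0) at_top"
proof -
  define f where "f y = max (u y) 0" for y
  define g where "g y = (1 - norm y powr p) * exp (4 * u y)" for y
  define R0 where "R0 = 2 powr (1/p)"
  define A where "A = cball (0::real^4) R0"
  define C where "C = \<bar>\<integral>y. indicator A y * f y \<partial>lebesgue\<bar> + (\<integral>y. \<bar>g y\<bar> \<partial>lebesgue)"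
  have gi: "integrable lebesgue g" using assms(3) by (simp add: g_def[abs_def])
  have gai: "integrable lebesgue (\<lambda>y. \<bar>g y\<bar>)" using gi by auto
  have fm: "f \<in> borel_measurable lebesgue" using assms(2) unfolding f_def by measurable
  have Am: "A \<in> sets lebesgue" unfolding A_def by simp
  have out: "f y \<le> \<bar>g y\<bar>" if "y \<notin> A" for y
  proof -
    have "norm y > R0" using that by (simp add: A_def)
    hence "norm y powr p > R0 powr p" using assms(1)
      by (simp add: R0_def powr_less_mono2)
    also have "R0 powr p = 2" using assms(1) by (simp add: R0_def powr_powr)
    finally have "\<bar>1 - norm y powr p\<bar> \<ge> 1" by simp
    hence "exp (4 * u y) \<le> \<bar>g y\<bar>" by (simp add: g_def abs_mult)
    moreover have "max (u y) 0 \<le> exp (4 * u y)"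
      using exp_ge_add_one_self[of "4 * u y"] exp_gt_zero[of "4 * u y"] by linarith
    ultimately show ?thesis by (simp add: f_def)
  qed
  have bound: "0 \<le> (\<integral>y\<in>ball x r. f y \<partial>lebesgue) \<and> (\<integral>y\<in>ball x r. f y \<partial>lebesgue) \<le> C"
    if r: "r > R0 + norm x" for r
  proof -
    have AB: "A \<subseteq> ball x r" unfolding A_def using r
      by (auto simp: dist_norm) (smt (verit) norm_triangle_ineq4)
    show ?thesis
    proof (cases "integrable lebesgue (\<lambda>y. indicator (ball x r) y * f y)")
      case True
      have iA: "integrable lebesgue (\<lambda>y. indicator A y * f y)"
      proof -
        have "(\<lambda>y. indicator A y * f y) = (\<lambda>y. indicator A y * (indicator (ball x r) y * f y))"
          using AB by (auto simp: indicator_def fun_eq_iff)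
        thus ?thesis using integrable_mult_indicator[OF Am True] by simp
      qed
      have "(\<integral>y\<in>ball x r. f y \<partial>lebesgue) = (\<integral>y. indicator (ball x r) y * f y \<partial>lebesgue)"
        by (simp add: set_lebesgue_integral_def)
      also have "\<dots> \<le> (\<integral>y. indicator A y * f y + \<bar>g y\<bar> \<partial>lebesgue)"
      proof (rule integral_mono[OF True])
        show "integrable lebesgue (\<lambda>y. indicator A y * f y + \<bar>g y\<bar>)" using iA gai by simp
        fix y show "indicator (ball x r) y * f y \<le> indicator A y * f y + \<bar>g y\<bar>"
          using out[of y] AB by (cases "y \<in> A"; cases "y \<in> ball x r")
            (auto simp: f_def)
      qed
      also have "\<dots> = (\<integral>y. indicator A y * f y \<partial>lebesgue) + (\<integral>y. \<bar>g y\<bar> \<partial>lebesgue)"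
        using iA gai by simp
      also have "\<dots> \<le> C" unfolding C_def by simp
      finally have le: "(\<integral>y\<in>ball x r. f y \<partial>lebesgue) \<le> C" .
      have "0 \<le> (\<integral>y. indicator (ball x r) y * f y \<partial>lebesgue)"
        by (rule Bochner_Integration.integral_nonneg) (simp add: f_def indicator_def)
      with le show ?thesis by (simp add: set_lebesgue_integral_def)
    next
      case False
      hence "(\<integral>y\<in>ball x r. f y \<partial>lebesgue) = 0"
        by (simp add: set_lebesgue_integral_def not_integrable_integral_eq)
      moreover have "0 \<le> C" unfolding C_def by (simp add: integral_nonneg)
      ultimately show ?thesis by simp
    qed
  qed
  define K where "K = unit_ball_vol 4"
  have K: "K > 0" by (simp add: K_def)
  have lim: "((\<lambda>r. C / (K * r ^ 4)) \<longlongrightarrow> 0) at_top"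
  proof (rule tendsto_divide_0[OF tendsto_const])
    have "filterlim (\<lambda>r::real. r ^ 4) at_top at_top"
      by (intro filterlim_pow_at_top filterlim_ident) simp
    hence "filterlim (\<lambda>r::real. K * r ^ 4) at_top at_top"
      using K by (intro filterlim_tendsto_pos_mult_at_top[OF tendsto_const]) auto
    thus "filterlim (\<lambda>r::real. K * r ^ 4) at_infinity at_top"
      by (rule filterlim_at_top_imp_at_infinity)
  qed
  show ?thesis
  proof (rule Lim_null_comparison[OF _ lim])
    have ev: "eventually (\<lambda>r. r > max 0 (R0 + norm x)) at_top"
      by (rule eventually_gt_at_top)
    show "\<forall>\<^sub>F r in at_top. norm ((1 / measure lebesgue (ball x r)) *
            (\<integral>y\<in>ball x r. max (u y) 0 \<partial>lebesgue)) \<le> C / (K * r ^ 4)"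
    proof (rule eventually_mono[OF ev])
      fix r assume r: "r > max 0 (R0 + norm x)"
      have m: "measure lebesgue (ball x r) = K * r ^ 4"
        using ball_meas[of r x] r by (simp add: K_def)
      have pos: "K * r ^ 4 > 0" using K r by simp
      from bound[of r] r have b: "0 \<le> (\<integral>y\<in>ball x r. f y \<partial>lebesgue)"
        "(\<integral>y\<in>ball x r. f y \<partial>lebesgue) \<le> C" by auto
      show "norm ((1 / measure lebesgue (ball x r)) *
            (\<integral>y\<in>ball x r. max (u y) 0 \<partial>lebesgue)) \<le> C / (K * r ^ 4)"
        using b pos unfolding m f_def[abs_def]
        using K by (simp add: abs_mult divide_right_mono)
    qed
  qed
qed

end
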